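(* Let $G$ be a bipartite permutation graph with a transitive vertex ordering $<$ and let $e,e'\in E(G)$ with $l(e)<l(e')$. (a) If $r(e)<l(e')$, then $\{e,e'\}$ is a uniquely restricted matching in $G$. (b) If $l(e')<r(e)<r(e')$, then $\{e,e'\}$ is a uniquely restricted matching in $G$ if and only if $l(e)r(e')\notin E(G)$. (c) If $r(e')<r(e)$, then $\{e,e'\}$ is not a uniquely restricted matching in $G$.
   Context: Graphs are finite, simple, undirected. A permutation graph is a graph isomorphic to some $G_\pi$, where for a permutation $\pi$ of $\{1,\dots,n\}$, $G_\pi$ has vertex set $\{1,\dots,n\}$ and edges $ij$ with $(i-j)(\pi(i)-\pi(j))<0$; a bipartite permutation graph is a permutation graph that is bipartite. An ordering $<$ of $V(G)$ is a transitive vertex ordering if for all $u<v<w$: (a) $uv,vw\in E(G)$ implies $uw\in E(G)$, and (b) $uw\in E(G)$ implies $uv\in E(G)$ or $vw\in E(G)$. For an edge $e=uv$, $l(e)=\min_<\{u,v\}$ and $r(e)=\max_<\{u,v\}$. A matching is a set of pairwise vertex-disjoint edges; it is uniquely restricted if no other matching of $G$ matches exactly the same vertex set. *)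

theory Defs
  imports Main
begin

definition simple_graph :: "'a set \<Rightarrow> 'a set set \<Rightarrow> bool" where
  "simple_graph V Es \<longleftrightarrow> finite V \<and>
     (\<forall>e\<in>Es. \<exists>u v. e = {u, v} \<and> u \<noteq> v \<and> u \<in> V \<and> v \<in> V)"

definition perm_graph_edges :: "nat \<Rightarrow> (nat \<Rightarrow> nat) \<Rightarrow> nat set set" where
  "perm_graph_edges n \<pi> = {{i, j} | i j. i \<in> {1..n} \<and> j \<in> {1..n} \<and>
      (int i - int j) * (int (\<pi> i) - int (\<pi> j)) < 0}"

definition permutation_graph :: "'a set \<Rightarrow> 'a set set \<Rightarrow> bool" where
  "permutation_graph V Es \<longleftrightarrow> (\<exists>n \<pi> \<phi>. bij_betw \<pi> {1..n} {1..n} \<and>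
      bij_betw \<phi> V {1..n} \<and>
      (\<forall>u\<in>V. \<forall>v\<in>V. {u, v} \<in> Es \<longleftrightarrow> {\<phi> u, \<phi> v} \<in> perm_graph_edges n \<pi>))"

definition bipartite :: "'a set \<Rightarrow> 'a set set \<Rightarrow> bool" where
  "bipartite V Es \<longleftrightarrow> (\<exists>A B. A \<union> B = V \<and> A \<inter> B = {} \<and>
      (\<forall>e\<in>Es. \<exists>a\<in>A. \<exists>b\<in>B. e = {a, b}))"

definition bipartite_permutation_graph :: "'a set \<Rightarrow> 'a set set \<Rightarrow> bool" where
  "bipartite_permutation_graph V Es \<longleftrightarrow>
     simple_graph V Es \<and> permutation_graph V Es \<and> bipartite V Es"

definition linear_order_on_set :: "'a set \<Rightarrow> ('a \<Rightarrow> 'a \<Rightarrow> bool) \<Rightarrow> bool" where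
  "linear_order_on_set V lt \<longleftrightarrow>
     (\<forall>u\<in>V. \<not> lt u u) \<and>
     (\<forall>u\<in>V. \<forall>v\<in>V. \<forall>w\<in>V. lt u v \<longrightarrow> lt v w \<longrightarrow> lt u w) \<and>
     (\<forall>u\<in>V. \<forall>v\<in>V. u \<noteq> v \<longrightarrow> lt u v \<or> lt v u)"

definition transitive_vertex_ordering :: "'a set \<Rightarrow> 'a set set \<Rightarrow> ('a \<Rightarrow> 'a \<Rightarrow> bool) \<Rightarrow> bool" where
  "transitive_vertex_ordering V Es lt \<longleftrightarrow> linear_order_on_set V lt \<and>
     (\<forall>u\<in>V. \<forall>v\<in>V. \<forall>w\<in>V. lt u v \<longrightarrow> lt v w \<longrightarrow>
        ({u, v} \<in> Es \<longrightarrow> {v, w} \<in> Es \<longrightarrow> {u, w} \<in> Es) \<and>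
        ({u, w} \<in> Es \<longrightarrow> {u, v} \<in> Es \<or> {v, w} \<in> Es))"

definition matching :: "'a set set \<Rightarrow> 'a set set \<Rightarrow> bool" where
  "matching Es M \<longleftrightarrow> M \<subseteq> Es \<and> (\<forall>e\<in>M. \<forall>e'\<in>M. e \<noteq> e' \<longrightarrow> e \<inter> e' = {})"

definition uniquely_restricted_matching :: "'a set set \<Rightarrow> 'a set set \<Rightarrow> bool" where
  "uniquely_restricted_matching Es M \<longleftrightarrow> matching Es M \<and>
     (\<forall>M'. matching Es M' \<and> \<Union>M' = \<Union>M \<longrightarrow> M' = M)"

end

theory Submission
  imports Defs
begin

lemma aux4:
  assumes dist: "w\<noteq>x" "w\<noteq>y" "w\<noteq>z" "x\<noteq>y" "x\<noteq>z" "y\<noteq>z"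
    and two: "\<forall>e\<in>Es. \<exists>u v. e={u,v} \<and> u\<noteq>v"
    and m: "matching Es M'" and U: "\<Union>M' = {w,x,y,z}" and wx: "{w,x} \<in> M'"
  shows "M' = {{w,x},{y,z}}"
proof -
  have sub: "M' \<subseteq> Es" and dj: "\<And>e e'. e\<in>M' \<Longrightarrow> e'\<in>M' \<Longrightarrow> e\<noteq>e' \<Longrightarrow> e\<inter>e'={}"
    using m unfolding matching_def by auto
  have inU: "\<And>e. e\<in>M' \<Longrightarrow> e \<subseteq> {w,x,y,z}"
  proof -
    fix e assume "e \<in> M'"
    then have "e \<subseteq> \<Union>M'" by (rule Union_upper)
    then show "e \<subseteq> {w,x,y,z}" using U by simp
  qed
  have "y \<in> \<Union>M'" using U by simp
  then obtain e2 where e2: "e2\<in>M'" "y\<in>e2" by (rule UnionE)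
  have ne: "e2 \<noteq> {w,x}" using e2(2) dist by auto
  have "e2 \<inter> {w,x} = {}" using dj[OF e2(1) wx ne] .
  moreover have "\<exists>u v. e2={u,v} \<and> u\<noteq>v" using two sub e2(1) by (meson subsetD)
  then obtain u v where uv: "e2={u,v}" "u\<noteq>v" by (elim exE conjE)
  ultimately have uvin: "u \<in> {y,z}" "v \<in> {y,z}" using inU[OF e2(1)] by blast+
  have e2eq: "e2 = {y,z}"
  proof -
    have "y = u \<or> y = v" using e2(2) uv by simp
    then show ?thesis using uvin uv by auto
  qed
  show ?thesis
  proof
    show "{{w,x},{y,z}} \<subseteq> M'" using wx e2 e2eq by auto
    show "M' \<subseteq> {{w,x},{y,z}}"
    proof
      fix e3 assume e3: "e3\<in>M'"
      show "e3 \<in> {{w,x},{y,z}}"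
      proof (rule ccontr)
        assume "e3 \<notin> {{w,x},{y,z}}"
        then have "e3 \<inter> {w,x} = {}" "e3 \<inter> {y,z} = {}"
          using dj[OF e3 wx] dj[OF e3 e2(1)] e2eq by auto
        moreover have "\<exists>u v. e3={u,v} \<and> u\<noteq>v" using two sub e3 by (meson subsetD)
        then obtain u v where "e3={u,v}" by (elim exE conjE)
        ultimately show False using inU[OF e3] by blast
      qed
    qed
  qed
qed

lemma perfect4:
  assumes dist: "a\<noteq>b" "a\<noteq>c" "a\<noteq>d" "b\<noteq>c" "b\<noteq>d" "c\<noteq>d"
    and two: "\<forall>e\<in>Es. \<exists>u v. e={u,v} \<and> u\<noteq>v"
    and m: "matching Es M'" and U: "\<Union>M' = {a,b,c,d}"
  shows "M' = {{a,b},{c,d}} \<or> M' = {{a,c},{b,d}} \<or> M' = {{a,d},{b,c}}"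
proof -
  have "a \<in> \<Union>M'" using U by simp
  then obtain e where e: "e\<in>M'" "a\<in>e" by (rule UnionE)
  have "e \<in> Es" using m e unfolding matching_def by auto
  then have "\<exists>u v. e={u,v} \<and> u\<noteq>v" using two by (rule bspec[rotated])
  then obtain u v where uv: "e={u,v}" "u\<noteq>v" by (elim exE conjE)
  have "e \<subseteq> \<Union>M'" using e(1) by (rule Union_upper)
  then have ein: "e \<subseteq> {a,b,c,d}" using U by simp
  have "e = {a,b} \<or> e = {a,c} \<or> e = {a,d}"
  proof (cases "u = a")
    case True
    then have "v = b \<or> v = c \<or> v = d" using uv ein by auto
    then show ?thesis using uv True by auto
  next
    case False
    then have va: "v = a" using uv e by simp
    then have "u = b \<or> u = c \<or> u = d" using uv ein False by auto
    moreover have "e = {a,u}" using uv va by (simp add: insert_commute)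
    ultimately show ?thesis by auto
  qed
  moreover have "e = {a,b} \<Longrightarrow> M' = {{a,b},{c,d}}"
  proof -
    assume h: "e = {a,b}"
    have "{a,b} \<in> M'" using e(1) h by simp
    then show ?thesis by (rule aux4[OF dist two m U])
  qed
  moreover have "e = {a,c} \<Longrightarrow> M' = {{a,c},{b,d}}"
  proof -
    assume h: "e = {a,c}"
    have "{a,c} \<in> M'" using e(1) h by simp
    moreover have "\<Union>M' = {a,c,b,d}" using U by (simp add: insert_commute)
    ultimately have "M' = {{a,c},{b,d}}"
      by (rule aux4[OF dist(2) dist(1) dist(3) dist(4)[symmetric] dist(6) dist(5) two m, rotated])
    then show ?thesis .
  qed
  moreover have "e = {a,d} \<Longrightarrow> M' = {{a,d},{b,c}}"
  proof -
    assume h: "e = {a,d}"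
    have "{a,d} \<in> M'" using e(1) h by simp
    moreover have "\<Union>M' = {a,d,b,c}" using U by (simp add: insert_commute)
    ultimately have "M' = {{a,d},{b,c}}"
      by (rule aux4[OF dist(3) dist(1) dist(2) dist(5)[symmetric] dist(6)[symmetric] dist(4) two m, rotated])
    then show ?thesis .
  qed
  ultimately show ?thesis by (elim disjE) simp_all
qed

lemma bip_tri:
  assumes "bipartite V Es" "{x,y}\<in>Es" "{y,z}\<in>Es" "{x,z}\<in>Es"
  shows False
proof -
  obtain A B where AB: "A \<inter> B = {}" "\<forall>e\<in>Es. \<exists>a\<in>A. \<exists>b\<in>B. e = {a, b}"
    using assms(1) unfolding bipartite_def by blast
  have k: "\<And>p q. {p,q}\<in>Es \<Longrightarrow> (p\<in>A \<longleftrightarrow> q\<notin>A)"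
  proof -
    fix p q assume "{p,q}\<in>Es"
    then obtain a' b' where "a'\<in>A" "b'\<in>B" "{p,q} = {a',b'}" using AB by blast
    then show "(p\<in>A \<longleftrightarrow> q\<notin>A)" using AB(1) by (auto simp: doubleton_eq_iff)
  qed
  have "x\<in>A \<longleftrightarrow> y\<notin>A" "y\<in>A \<longleftrightarrow> z\<notin>A" "x\<in>A \<longleftrightarrow> z\<notin>A"
    using k[OF assms(2)] k[OF assms(3)] k[OF assms(4)] by auto
  then show False by auto
qed

theorem lemma7:
  fixes V :: "'a set" and Es :: "'a set set" and lt :: "'a \<Rightarrow> 'a \<Rightarrow> bool"
    and a b c d :: 'a
  assumes G: "bipartite_permutation_graph V Es"
    and ord: "transitive_vertex_ordering V Es lt"
    and e: "{a, b} \<in> Es" and ab: "lt a b"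
    and e': "{c, d} \<in> Es" and cd: "lt c d"
    and ac: "lt a c"
  shows "(lt b c \<longrightarrow> uniquely_restricted_matching Es {{a, b}, {c, d}})
       \<and> (lt c b \<and> lt b d \<longrightarrow>
            (uniquely_restricted_matching Es {{a, b}, {c, d}} \<longleftrightarrow> {a, d} \<notin> Es))
       \<and> (lt d b \<longrightarrow> \<not> uniquely_restricted_matching Es {{a, b}, {c, d}})"
proof -
  have sg: "simple_graph V Es" and bp: "bipartite V Es"
    using G unfolding bipartite_permutation_graph_def by auto
  have sg': "\<forall>e\<in>Es. \<exists>u v. e = {u, v} \<and> u \<noteq> v \<and> u \<in> V \<and> v \<in> V"
    using sg by (simp add: simple_graph_def)
  have two: "\<forall>e\<in>Es. \<exists>u v. e={u,v} \<and> u\<noteq>v"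
  proof
    fix x assume "x \<in> Es"
    have "\<exists>u v. x = {u, v} \<and> u \<noteq> v \<and> u \<in> V \<and> v \<in> V" using sg' \<open>x \<in> Es\<close> by (rule bspec)
    then show "\<exists>u v. x={u,v} \<and> u\<noteq>v" by blast
  qed
  have inV: "\<And>u v. {u,v}\<in>Es \<Longrightarrow> u\<in>V \<and> v\<in>V"
  proof -
    fix u v assume "{u,v}\<in>Es"
    have "\<exists>p q. {u,v} = {p, q} \<and> p \<noteq> q \<and> p \<in> V \<and> q \<in> V" using sg' \<open>{u,v} \<in> Es\<close> by (rule bspec)
    then obtain p q where "{u,v} = {p, q} \<and> p \<noteq> q \<and> p \<in> V \<and> q \<in> V" by (elim exE)
    then show "u\<in>V \<and> v\<in>V" by (auto simp: doubleton_eq_iff)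
  qed
  have V: "a\<in>V" "b\<in>V" "c\<in>V" "d\<in>V" using inV[OF e] inV[OF e'] by auto
  have lo: "linear_order_on_set V lt" using ord by (simp add: transitive_vertex_ordering_def)
  have irr: "\<And>u. u\<in>V \<Longrightarrow> \<not> lt u u" and tr: "\<And>u v w. u\<in>V \<Longrightarrow> v\<in>V \<Longrightarrow> w\<in>V \<Longrightarrow> lt u v \<Longrightarrow> lt v w \<Longrightarrow> lt u w"
    using lo unfolding linear_order_on_set_def by blast+
  have T: "\<forall>u\<in>V. \<forall>v\<in>V. \<forall>w\<in>V. lt u v \<longrightarrow> lt v w \<longrightarrow>
        ({u, v} \<in> Es \<longrightarrow> {v, w} \<in> Es \<longrightarrow> {u, w} \<in> Es) \<and>
        ({u, w} \<in> Es \<longrightarrow> {u, v} \<in> Es \<or> {v, w} \<in> Es)"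
    using ord by (simp add: transitive_vertex_ordering_def)
  have T1: "\<And>u v w. u\<in>V \<Longrightarrow> v\<in>V \<Longrightarrow> w\<in>V \<Longrightarrow> lt u v \<Longrightarrow> lt v w \<Longrightarrow> {u,v}\<in>Es \<Longrightarrow> {v,w}\<in>Es \<Longrightarrow> {u,w}\<in>Es"
    using T by meson
  have T2: "\<And>u v w. u\<in>V \<Longrightarrow> v\<in>V \<Longrightarrow> w\<in>V \<Longrightarrow> lt u v \<Longrightarrow> lt v w \<Longrightarrow> {u,w}\<in>Es \<Longrightarrow> {u,v}\<in>Es \<or> {v,w}\<in>Es"
    using T by meson
  have tri: "\<And>x y z. {x,y}\<in>Es \<Longrightarrow> {y,z}\<in>Es \<Longrightarrow> {x,z}\<in>Es \<Longrightarrow> False"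
    by (rule bip_tri[OF bp])
  have neq: "\<And>u v. u\<in>V \<Longrightarrow> lt u v \<Longrightarrow> u\<noteq>v" using irr by metis
  have char: "uniquely_restricted_matching Es {{a, b}, {c, d}} \<longleftrightarrow>
      \<not> ({a,c}\<in>Es \<and> {b,d}\<in>Es) \<and> \<not> ({a,d}\<in>Es \<and> {b,c}\<in>Es)"
    if dist: "a\<noteq>b" "a\<noteq>c" "a\<noteq>d" "b\<noteq>c" "b\<noteq>d" "c\<noteq>d"
  proof
    assume u: "uniquely_restricted_matching Es {{a, b}, {c, d}}"
    then have uu: "\<And>M'. matching Es M' \<Longrightarrow> \<Union>M' = \<Union>{{a, b}, {c, d}} \<Longrightarrow> M' = {{a, b}, {c, d}}"
      unfolding uniquely_restricted_matching_def by (elim conjE) simp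
    show "\<not> ({a,c}\<in>Es \<and> {b,d}\<in>Es) \<and> \<not> ({a,d}\<in>Es \<and> {b,c}\<in>Es)"
    proof (intro conjI notI)
      assume h: "{a,c}\<in>Es \<and> {b,d}\<in>Es"
      have "matching Es {{a,c},{b,d}}" using h dist unfolding matching_def by auto
      moreover have "\<Union>{{a,c},{b,d}} = \<Union>{{a, b}, {c, d}}" by auto
      moreover have "{{a,c},{b,d}} \<noteq> {{a, b}, {c, d}}" using dist by (auto simp: doubleton_eq_iff)
      ultimately show False using uu by metis
    next
      assume h: "{a,d}\<in>Es \<and> {b,c}\<in>Es"
      have "matching Es {{a,d},{b,c}}" using h dist unfolding matching_def by auto
      moreover have "\<Union>{{a,d},{b,c}} = \<Union>{{a, b}, {c, d}}" by auto
      moreover have "{{a,d},{b,c}} \<noteq> {{a, b}, {c, d}}" using dist by (auto simp: doubleton_eq_iff)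
      ultimately show False using uu by metis
    qed
  next
    assume n: "\<not> ({a,c}\<in>Es \<and> {b,d}\<in>Es) \<and> \<not> ({a,d}\<in>Es \<and> {b,c}\<in>Es)"
    have "matching Es {{a, b}, {c, d}}" using e e' dist unfolding matching_def by auto
    moreover have "\<forall>M'. matching Es M' \<and> \<Union>M' = \<Union>{{a, b}, {c, d}} \<longrightarrow> M' = {{a, b}, {c, d}}"
    proof (intro allI impI)
      fix M' assume h: "matching Es M' \<and> \<Union>M' = \<Union>{{a, b}, {c, d}}"
      then have U: "\<Union>M' = {a,b,c,d}" by auto
      have sub: "M' \<subseteq> Es" using h unfolding matching_def by auto
      have "M' = {{a,b},{c,d}} \<or> M' = {{a,c},{b,d}} \<or> M' = {{a,d},{b,c}}"
        by (rule perfect4[OF dist two conjunct1[OF h] U])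
      then show "M' = {{a, b}, {c, d}}"
      proof (elim disjE)
        assume "M' = {{a,c},{b,d}}" then show ?thesis using n sub by simp
      next
        assume "M' = {{a,d},{b,c}}" then show ?thesis using n sub by simp
      qed
    qed
    ultimately show "uniquely_restricted_matching Es {{a, b}, {c, d}}"
      unfolding uniquely_restricted_matching_def by (rule conjI)
  qed
  show ?thesis
  proof (intro conjI impI)
    assume bc: "lt b c"
    have ad: "lt a d" using tr[OF V(1) V(3) V(4) ac cd] .
    have bd: "lt b d" using tr[OF V(2) V(3) V(4) bc cd] .
    have dist: "a\<noteq>b" "a\<noteq>c" "a\<noteq>d" "b\<noteq>c" "b\<noteq>d" "c\<noteq>d"
      using neq[OF V(1) ab] neq[OF V(1) ac] neq[OF V(1) ad] neq[OF V(2) bc] neq[OF V(2) bd] neq[OF V(3) cd] .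
    have 1: "\<not> ({a,c}\<in>Es \<and> {b,d}\<in>Es)"
    proof
      assume h: "{a,c}\<in>Es \<and> {b,d}\<in>Es"
      then have "{a,d}\<in>Es" using T1[OF V(1) V(2) V(4) ab bd e] by simp
      then show False using tri[OF e conjunct2[OF h]] by simp
    qed
    have 2: "\<not> ({a,d}\<in>Es \<and> {b,c}\<in>Es)"
    proof
      assume h: "{a,d}\<in>Es \<and> {b,c}\<in>Es"
      then have "{a,c}\<in>Es" using T1[OF V(1) V(2) V(3) ab bc e] by simp
      then show False using tri[OF e conjunct2[OF h]] by simp
    qed
    show "uniquely_restricted_matching Es {{a, b}, {c, d}}" using char[OF dist] 1 2 by simp
  next
    assume h0: "lt c b \<and> lt b d"
    then have cb: "lt c b" and bd: "lt b d" by auto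
    have ad: "lt a d" using tr[OF V(1) V(2) V(4) ab bd] .
    have dist: "a\<noteq>b" "a\<noteq>c" "a\<noteq>d" "b\<noteq>c" "b\<noteq>d" "c\<noteq>d"
      using neq[OF V(1) ab] neq[OF V(1) ac] neq[OF V(1) ad] neq[OF V(3) cb] neq[OF V(2) bd] neq[OF V(3) cd]
      by auto
    have 1: "\<not> ({a,c}\<in>Es \<and> {b,d}\<in>Es)"
    proof
      assume h: "{a,c}\<in>Es \<and> {b,d}\<in>Es"
      then have "{a,d}\<in>Es" using T1[OF V(1) V(3) V(4) ac cd _ e'] by simp
      then show False using tri[of a c d] h e' by simp
    qed
    have 2: "{a,d}\<in>Es \<Longrightarrow> {b,c}\<in>Es"
    proof -
      assume adE: "{a,d}\<in>Es"
      have "{c,b}\<in>Es \<or> {b,d}\<in>Es" using T2[OF V(3) V(2) V(4) cb bd e'] .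
      moreover have "{b,d}\<notin>Es" using tri[of a b d] e adE by auto
      ultimately show "{b,c}\<in>Es" by (simp add: insert_commute)
    qed
    show "uniquely_restricted_matching Es {{a, b}, {c, d}} \<longleftrightarrow> {a, d} \<notin> Es"
      using char[OF dist] 1 2 by auto
  next
    assume db: "lt d b"
    have ad: "lt a d" using tr[OF V(1) V(3) V(4) ac cd] .
    have cb: "lt c b" using tr[OF V(3) V(4) V(2) cd db] .
    have dist: "a\<noteq>b" "a\<noteq>c" "a\<noteq>d" "b\<noteq>c" "b\<noteq>d" "c\<noteq>d"
      using neq[OF V(1) ab] neq[OF V(1) ac] neq[OF V(1) ad] neq[OF V(3) cb] neq[OF V(4) db] neq[OF V(3) cd]
      by auto
    have x: "{a,c}\<in>Es \<or> {c,b}\<in>Es" using T2[OF V(1) V(3) V(2) ac cb e] .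
    have y: "{a,d}\<in>Es \<or> {d,b}\<in>Es" using T2[OF V(1) V(4) V(2) ad db e] .
    have cbE: "{c,b} = {b,c}" and dbE: "{d,b} = {b,d}" by auto
    have nx: "\<not> ({a,c}\<in>Es \<and> {a,d}\<in>Es)" using tri[of a c d] e' by auto
    have ny: "\<not> ({b,c}\<in>Es \<and> {b,d}\<in>Es)" using tri[of c d b] e' cbE dbE by auto
    have "({a,c}\<in>Es \<and> {b,d}\<in>Es) \<or> ({a,d}\<in>Es \<and> {b,c}\<in>Es)"
      using x y nx ny unfolding cbE dbE by blast
    then show "\<not> uniquely_restricted_matching Es {{a, b}, {c, d}}" using char[OF dist] by simp
  qed
qed

end
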